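(* Let $L$ be a latin square of order $n$ on the symbols $\{1,\dots,n\}$ that has no transversal, and let $S\subseteq S_n$ be the set of its rows, regarded as permutations (the row with entries $l_1,\dots,l_n$ in columns $1,\dots,n$ being the permutation $i\mapsto l_i$). Then $\mathrm{cr}(S)=n-2$.
   Context: $S_n$ is the symmetric group on $\{1,\dots,n\}$ with the Hamming distance: the distance between $g,h\in S_n$ is the number of points $i$ with $g(i)\ne h(i)$. The covering radius $\mathrm{cr}(P)$ of a nonempty $P\subseteq S_n$ is the smallest $r$ such that every permutation in $S_n$ is at distance at most $r$ from some element of $P$. A latin square of order $n$ is an $n\times n$ array in which each symbol occurs exactly once in each row and column; a transversal is a set of $n$ cells, one from each row and one from each column, no two containing the same symbol. *)

theory Defs
  imports "HOL-Combinatorics.Permutations"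
begin

definition sym_group :: "nat \<Rightarrow> (nat \<Rightarrow> nat) set" where
  "sym_group n = {g. g permutes {1..n}}"

definition hamming :: "nat \<Rightarrow> (nat \<Rightarrow> nat) \<Rightarrow> (nat \<Rightarrow> nat) \<Rightarrow> nat" where
  "hamming n g h = card {i \<in> {1..n}. g i \<noteq> h i}"

definition covering_radius :: "nat \<Rightarrow> (nat \<Rightarrow> nat) set \<Rightarrow> nat" where
  "covering_radius n P =
     (LEAST r. \<forall>g \<in> sym_group n. \<exists>p \<in> P. hamming n g p \<le> r)"

definition latin_square :: "nat \<Rightarrow> (nat \<Rightarrow> nat \<Rightarrow> nat) \<Rightarrow> bool" where
  "latin_square n L \<longleftrightarrow>
     (\<forall>r \<in> {1..n}. bij_betw (\<lambda>c. L r c) {1..n} {1..n}) \<and>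
     (\<forall>c \<in> {1..n}. bij_betw (\<lambda>r. L r c) {1..n} {1..n})"

definition transversal :: "nat \<Rightarrow> (nat \<Rightarrow> nat \<Rightarrow> nat) \<Rightarrow> (nat \<times> nat) set \<Rightarrow> bool" where
  "transversal n L T \<longleftrightarrow>
     T \<subseteq> {1..n} \<times> {1..n} \<and> card T = n \<and>
     bij_betw fst T {1..n} \<and> bij_betw snd T {1..n} \<and>
     inj_on (\<lambda>(r, c). L r c) T"

definition row_perm :: "nat \<Rightarrow> (nat \<Rightarrow> nat \<Rightarrow> nat) \<Rightarrow> nat \<Rightarrow> nat \<Rightarrow> nat" where
  "row_perm n L r = (\<lambda>i. if i \<in> {1..n} then L r i else i)"

definition row_set :: "nat \<Rightarrow> (nat \<Rightarrow> nat \<Rightarrow> nat) \<Rightarrow> (nat \<Rightarrow> nat) set" where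
  "row_set n L = row_perm n L ` {1..n}"

end

theory Submission
  imports Defs
begin

definition agr :: "nat \<Rightarrow> (nat \<Rightarrow> nat \<Rightarrow> nat) \<Rightarrow> (nat \<Rightarrow> nat) \<Rightarrow> nat \<Rightarrow> nat" where
  "agr n L g t = card {i \<in> {1..n}. L t i = g i}"

definition exc :: "nat \<Rightarrow> (nat \<Rightarrow> nat \<Rightarrow> nat) \<Rightarrow> (nat \<Rightarrow> nat) \<Rightarrow> nat" where
  "exc n L g = (\<Sum>t\<in>{1..n}. agr n L g t - 2)"

lemma lat_row: "latin_square n L \<Longrightarrow> t \<in> {1..n} \<Longrightarrow> bij_betw (L t) {1..n} {1..n}"
  unfolding latin_square_def by auto

lemma lat_col: "latin_square n L \<Longrightarrow> i \<in> {1..n} \<Longrightarrow> bij_betw (\<lambda>t. L t i) {1..n} {1..n}"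
  unfolding latin_square_def by auto

lemma hamming_row:
  assumes "t \<in> {1..n}"
  shows "hamming n g (row_perm n L t) = n - agr n L g t"
proof -
  have "{i \<in> {1..n}. g i \<noteq> row_perm n L t i} = {1..n} - {i \<in> {1..n}. L t i = g i}"
    unfolding row_perm_def by auto
  moreover have "card ({1..n} - {i \<in> {1..n}. L t i = g i}) = n - card {i \<in> {1..n}. L t i = g i}"
    by (subst card_Diff_subset) auto
  ultimately show ?thesis unfolding hamming_def agr_def by simp
qed

lemma col_unique:
  assumes lat: "latin_square n L" and i: "i \<in> {1..n}" and x: "x \<in> {1..n}"
  shows "{t \<in> {1..n}. L t i = x} = {inv_into {1..n} (\<lambda>t. L t i) x}"
proof -
  have b: "bij_betw (\<lambda>t. L t i) {1..n} {1..n}" using lat_col[OF lat i] .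
  show ?thesis
  proof (intro equalityI subsetI)
    fix t assume "t \<in> {t \<in> {1..n}. L t i = x}"
    then show "t \<in> {inv_into {1..n} (\<lambda>t. L t i) x}"
      using b by (auto simp: bij_betw_def intro: inv_into_f_f[symmetric])
  next
    fix t
    have xi: "x \<in> (\<lambda>t. L t i) ` {1..n}" using b x by (simp add: bij_betw_def)
    assume "t \<in> {inv_into {1..n} (\<lambda>t. L t i) x}"
    then show "t \<in> {t \<in> {1..n}. L t i = x}"
      using inv_into_into[OF xi] f_inv_into_f[OF xi] by auto
  qed
qed

lemma card_filter_sum: "finite A \<Longrightarrow> card {i \<in> A. P i} = (\<Sum>i\<in>A. if P i then 1 else 0)"
  by (simp add: sum.inter_filter[symmetric])

lemma sum_agr:
  assumes lat: "latin_square n L" and g: "g permutes {1..n}"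
  shows "(\<Sum>t\<in>{1..n}. agr n L g t) = n"
proof -
  have "(\<Sum>t\<in>{1..n}. agr n L g t) = (\<Sum>t\<in>{1..n}. \<Sum>i\<in>{1..n}. if L t i = g i then 1 else 0)"
    unfolding agr_def by (rule sum.cong[OF refl], rule card_filter_sum) simp
  also have "\<dots> = (\<Sum>i\<in>{1..n}. \<Sum>t\<in>{1..n}. if L t i = g i then 1 else 0)"
    by (rule sum.swap)
  also have "\<dots> = (\<Sum>i\<in>{1..n}. card {t \<in> {1..n}. L t i = g i})"
    by (rule sum.cong[OF refl], rule card_filter_sum[symmetric]) simp
  also have "\<dots> = (\<Sum>i\<in>{1..n}. 1)"
  proof (rule sum.cong)
    fix i assume i: "i \<in> {1..n}"
    have "g i \<in> {1..n}" using permutes_in_image[OF g] i by blast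
    then show "card {t \<in> {1..n}. L t i = g i} = 1"
      using col_unique[OF lat i] by simp
  qed simp
  finally show ?thesis by simp
qed

lemma part_a:
  assumes lat: "latin_square n L" and nt: "\<not> (\<exists>T. transversal n L T)"
    and g: "g permutes {1..n}"
  shows "\<exists>t\<in>{1..n}. agr n L g t \<ge> 2"
proof (rule ccontr)
  assume "\<not> ?thesis"
  then have le1: "\<And>t. t \<in> {1..n} \<Longrightarrow> card {i \<in> {1..n}. L t i = g i} \<le> Suc 0"
    unfolding agr_def by force
  define T where "T = {(t, i). t \<in> {1..n} \<and> i \<in> {1..n} \<and> L t i = g i}"
  have gN: "\<And>i. i \<in> {1..n} \<Longrightarrow> g i \<in> {1..n}" using permutes_in_image[OF g] by blast
  have ginj: "inj g" using permutes_inj[OF g] .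
  have Tsub: "T \<subseteq> {1..n} \<times> {1..n}" unfolding T_def by auto
  have sndinj: "inj_on snd T"
  proof (rule inj_onI)
    fix x y assume x: "x \<in> T" and y: "y \<in> T" and e: "snd x = snd y"
    obtain t i where xt: "x = (t, i)" by (cases x)
    obtain t' i' where yt: "y = (t', i')" by (cases y)
    have ii: "i' = i" using e xt yt by simp
    have "inj_on (\<lambda>t. L t i) {1..n}" using lat_col[OF lat] x xt T_def by (auto simp: bij_betw_def)
    moreover have "L t i = L t' i" "t \<in> {1..n}" "t' \<in> {1..n}" using x y xt yt ii T_def by auto
    ultimately have "t = t'" by (meson inj_onD)
    then show "x = y" using xt yt ii by simp
  qed
  have sndsurj: "snd ` T = {1..n}"
  proof (intro equalityI subsetI)
    fix i assume "i \<in> snd ` T" then show "i \<in> {1..n}" using Tsub by auto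
  next
    fix i assume i: "i \<in> {1..n}"
    have "{t \<in> {1..n}. L t i = g i} = {inv_into {1..n} (\<lambda>t. L t i) (g i)}"
      using col_unique[OF lat i gN[OF i]] .
    then obtain t where "t \<in> {1..n}" "L t i = g i" by blast
    then have "(t, i) \<in> T" using i T_def by simp
    then show "i \<in> snd ` T" by force
  qed
  have sndb: "bij_betw snd T {1..n}" using sndinj sndsurj by (simp add: bij_betw_def)
  have cardT: "card T = n" using bij_betw_same_card[OF sndb] by simp
  have fstinj: "inj_on fst T"
  proof (rule inj_onI)
    fix x y assume x: "x \<in> T" and y: "y \<in> T" and e: "fst x = fst y"
    obtain t i where xt: "x = (t, i)" by (cases x)
    obtain t' i' where yt: "y = (t', i')" by (cases y)
    have tt: "t' = t" using e xt yt by simp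
    have t: "t \<in> {1..n}" using x xt T_def by simp
    have "finite {i \<in> {1..n}. L t i = g i}" by simp
    then have "\<forall>a\<in>{i \<in> {1..n}. L t i = g i}. \<forall>b\<in>{i \<in> {1..n}. L t i = g i}. a = b"
      using le1[OF t] card_le_Suc0_iff_eq by blast
    then have "i = i'" using x y xt yt tt T_def by auto
    then show "x = y" using xt yt tt by simp
  qed
  have fstsub: "fst ` T \<subseteq> {1..n}" using Tsub by auto
  have "card (fst ` T) = n" using card_image[OF fstinj] cardT by simp
  then have "fst ` T = {1..n}" using fstsub by (simp add: card_subset_eq)
  then have fstb: "bij_betw fst T {1..n}" using fstinj by (simp add: bij_betw_def)
  have linj: "inj_on (\<lambda>(r, c). L r c) T"
  proof (rule inj_onI)
    fix x y assume x: "x \<in> T" and y: "y \<in> T" and e: "(\<lambda>(r, c). L r c) x = (\<lambda>(r, c). L r c) y"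
    obtain t i where xt: "x = (t, i)" by (cases x)
    obtain t' i' where yt: "y = (t', i')" by (cases y)
    have "g i = g i'" using e x y xt yt T_def by simp
    then have "i = i'" using ginj by (auto dest: injD)
    then have "snd x = snd y" using xt yt by simp
    then show "x = y" using sndinj x y by (meson inj_onD)
  qed
  have "transversal n L T" unfolding transversal_def using Tsub cardT fstb sndb linj by blast
  then show False using nt by blast
qed

lemma card_two:
  assumes "finite A" "c \<in> A" "c' \<in> A" "c \<noteq> c'"
  shows "card {i \<in> A. P i} = card {i \<in> A - {c, c'}. P i} + (if P c then 1 else 0) + (if P c' then 1 else 0)"
proof -
  have "card {i \<in> A. P i} = (\<Sum>i\<in>A. if P i then 1 else 0)" using assms by (simp add: card_filter_sum)
  also have "\<dots> = (if P c then 1 else 0) + (\<Sum>i\<in>A - {c}. if P i then 1 else 0)"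
    using assms by (simp add: sum.remove)
  also have "(\<Sum>i\<in>A - {c}. if P i then 1 else 0) = (if P c' then 1 else 0) + (\<Sum>i\<in>A - {c} - {c'}. if P i then (1::nat) else 0)"
    using assms by (subst sum.remove[of "A - {c}" c']) auto
  also have "A - {c} - {c'} = A - {c, c'}" by auto
  also have "(\<Sum>i\<in>A - {c, c'}. if P i then (1::nat) else 0) = card {i \<in> A - {c, c'}. P i}"
    by (rule card_filter_sum[symmetric]) (use assms in auto)
  finally show ?thesis by simp
qed

lemma step:
  assumes lat: "latin_square n L" and g: "g permutes {1..n}"
    and r: "r \<in> {1..n}" and ar: "agr n L g r \<ge> 3"
  shows "\<exists>g'. g' permutes {1..n} \<and> exc n L g' < exc n L g"
proof -
  define a where "a = agr n L g"
  have gN: "\<And>i. i \<in> {1..n} \<Longrightarrow> g i \<in> {1..n}" using permutes_in_image[OF g] by blast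
  have ginj: "inj g" using permutes_inj[OF g] .
  have rinj: "\<And>t. t \<in> {1..n} \<Longrightarrow> inj_on (L t) {1..n}"
    using lat_row[OF lat] by (simp add: bij_betw_def)
  have "{i \<in> {1..n}. L r i = g i} \<noteq> {}" using ar unfolding agr_def by (metis card.empty not_numeral_le_zero)
  then obtain c where c: "c \<in> {1..n}" "L r c = g c" by blast
  define S2 where "S2 = {t \<in> {1..n}. t \<noteq> r \<and> a t \<ge> 2}"
  define N1 where "N1 = {t \<in> {1..n}. a t = 1}"
  have bound: "2 * card S2 + card N1 + 3 \<le> n"
  proof -
    have ar': "a r \<ge> 3" using ar a_def by simp
    have rN1: "r \<notin> N1" using ar' N1_def by auto
    have rS2: "r \<notin> S2" using S2_def by auto
    have dj: "N1 \<inter> S2 = {}" using N1_def S2_def by auto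
    have fin: "finite N1" "finite S2" using N1_def S2_def by auto
    have "sum a ({r} \<union> (N1 \<union> S2)) = a r + (sum a N1 + sum a S2)"
      using rN1 rS2 dj fin by (simp add: sum.union_disjoint)
    moreover have "sum a ({r} \<union> (N1 \<union> S2)) \<le> sum a {1..n}"
      by (rule sum_mono2) (use r N1_def S2_def in auto)
    moreover have "sum a {1..n} = n" using sum_agr[OF lat g] a_def by simp
    moreover have "sum a N1 = card N1" using N1_def by simp
    moreover have "sum a S2 \<ge> sum (\<lambda>_. 2) S2" by (rule sum_mono) (use S2_def in auto)
    moreover have "sum (\<lambda>_. 2::nat) S2 = 2 * card S2" by simp
    ultimately show ?thesis using ar' by linarith
  qed
  define B where "B = {c' \<in> {1..n} - {c}. \<exists>t\<in>{1..n}. (L t c = g c' \<and> a t \<ge> 2) \<or> (L t c' = g c \<and> a t \<ge> 2) \<or> (L t c' = g c \<and> L t c = g c' \<and> a t = 1)}"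
  have Bsub: "B \<subseteq> (\<lambda>t. inv g (L t c)) ` S2 \<union> (\<lambda>t. inv_into {1..n} (L t) (g c)) ` S2 \<union> (\<lambda>t. inv_into {1..n} (L t) (g c)) ` N1"
  proof
    fix c' assume "c' \<in> B"
    then obtain t where c': "c' \<in> {1..n}" "c' \<noteq> c" and t: "t \<in> {1..n}" and
      h: "(L t c = g c' \<and> a t \<ge> 2) \<or> (L t c' = g c \<and> a t \<ge> 2) \<or> (L t c' = g c \<and> L t c = g c' \<and> a t = 1)"
      unfolding B_def by blast
    have tr: "L t c' = g c \<Longrightarrow> t \<noteq> r"
    proof
      assume "L t c' = g c" "t = r"
      then have "L r c' = L r c" using c by simp
      then show False using rinj[OF r] c c' by (meson inj_onD)
    qed
    have tr2: "L t c = g c' \<Longrightarrow> t \<noteq> r"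
    proof
      assume "L t c = g c'" "t = r"
      then have "g c = g c'" using c by simp
      then show False using ginj c' by (metis injD)
    qed
    have e1: "L t c = g c' \<Longrightarrow> c' = inv g (L t c)" using permutes_inverses(2)[OF g] by simp
    have e2: "L t c' = g c \<Longrightarrow> c' = inv_into {1..n} (L t) (g c)"
      using inv_into_f_f[OF rinj[OF t] c'(1)] by simp
    show "c' \<in> (\<lambda>t. inv g (L t c)) ` S2 \<union> (\<lambda>t. inv_into {1..n} (L t) (g c)) ` S2 \<union> (\<lambda>t. inv_into {1..n} (L t) (g c)) ` N1"
      using h tr tr2 e1 e2 t unfolding S2_def N1_def by blast
  qed
  have "card B \<le> card ((\<lambda>t. inv g (L t c)) ` S2 \<union> (\<lambda>t. inv_into {1..n} (L t) (g c)) ` S2 \<union> (\<lambda>t. inv_into {1..n} (L t) (g c)) ` N1)"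
    by (rule card_mono[OF _ Bsub]) (simp add: S2_def N1_def)
  also have "\<dots> \<le> card ((\<lambda>t. inv g (L t c)) ` S2) + card ((\<lambda>t. inv_into {1..n} (L t) (g c)) ` S2) + card ((\<lambda>t. inv_into {1..n} (L t) (g c)) ` N1)"
    by (meson add_le_mono card_Un_le le_trans order_refl)
  also have "\<dots> \<le> card S2 + card S2 + card N1"
    by (intro add_le_mono card_image_le) (simp_all add: S2_def N1_def)
  finally have cB: "card B < card ({1..n} - {c})" using bound c by simp
  have "\<exists>c'\<in>{1..n} - {c}. c' \<notin> B"
  proof (rule ccontr)
    assume "\<not> ?thesis"
    then have "{1..n} - {c} \<subseteq> B" by blast
    moreover have "finite B" unfolding B_def by simp
    ultimately have "card ({1..n} - {c}) \<le> card B" by (rule card_mono[rotated])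
    then show False using cB by simp
  qed
  then obtain c' where c'0: "c' \<in> {1..n} - {c}" and c'B: "c' \<notin> B" by blast
  have c': "c' \<in> {1..n}" "c' \<noteq> c" using c'0 by auto
  have good: "\<And>t. t \<in> {1..n} \<Longrightarrow> \<not> ((L t c = g c' \<and> a t \<ge> 2) \<or> (L t c' = g c \<and> a t \<ge> 2) \<or> (L t c' = g c \<and> L t c = g c' \<and> a t = 1))"
    using c'0 c'B unfolding B_def by blast
  define g' where "g' = g \<circ> transpose c c'"
  have g'p: "g' permutes {1..n}" unfolding g'_def
    by (rule permutes_compose[OF permutes_swap_id g]) (use c c' in auto)
  have g'c: "g' c = g c'" "g' c' = g c" "\<And>i. i \<noteq> c \<Longrightarrow> i \<noteq> c' \<Longrightarrow> g' i = g i"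
    unfolding g'_def by auto
  define rest where "rest t = card {i \<in> {1..n} - {c, c'}. L t i = g i}" for t
  have fa: "a t = rest t + (if L t c = g c then 1 else 0) + (if L t c' = g c' then 1 else 0)" for t
    unfolding a_def agr_def rest_def using card_two[of "{1..n}" c c' "\<lambda>i. L t i = g i"] c c' by simp
  have fa': "agr n L g' t = rest t + (if L t c = g c' then 1 else 0) + (if L t c' = g c then 1 else 0)" for t
  proof -
    have "{i \<in> {1..n} - {c, c'}. L t i = g' i} = {i \<in> {1..n} - {c, c'}. L t i = g i}" using g'c by auto
    then show ?thesis
      unfolding agr_def rest_def using card_two[of "{1..n}" c c' "\<lambda>i. L t i = g' i"] c c' g'c by simp
  qed
  have n1: "\<not> L r c = g c'"
  proof
    assume "L r c = g c'" then have "g c = g c'" using c by simp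
    then show False using ginj c' by (metis injD)
  qed
  have n2: "\<not> L r c' = g c"
  proof
    assume "L r c' = g c" then have "L r c' = L r c" using c by simp
    then show False using rinj[OF r] c c' by (meson inj_onD)
  qed
  have lt: "agr n L g' r - 2 < a r - 2"
    using fa[of r] fa'[of r] n1 n2 c(2) ar a_def by simp
  have le: "agr n L g' t - 2 \<le> a t - 2" if t: "t \<in> {1..n}" for t
  proof (cases "t = r")
    case True then show ?thesis using lt by simp
  next
    case False
    show ?thesis using good[OF t] fa[of t] fa'[of t] by (auto split: if_splits)
  qed
  have "exc n L g' < exc n L g"
    unfolding exc_def a_def[symmetric]
    by (rule sum_strict_mono_ex1) (use le lt r in auto)
  then show ?thesis using g'p by blast
qed

lemma part_b:
  assumes lat: "latin_square n L"
  shows "\<exists>g. g permutes {1..n} \<and> (\<forall>t\<in>{1..n}. agr n L g t \<le> 2)"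
proof -
  have "id permutes {1..n}" by (rule permutes_id)
  then obtain g where g: "g permutes {1..n}" and mn: "\<forall>h. h permutes {1..n} \<longrightarrow> exc n L g \<le> exc n L h"
    using ex_has_least_nat[of "\<lambda>h. h permutes {1..n}" id "exc n L"] by blast
  have "\<forall>t\<in>{1..n}. agr n L g t \<le> 2"
  proof (rule ccontr)
    assume "\<not> ?thesis"
    then obtain r where "r \<in> {1..n}" "agr n L g r \<ge> 3" by force
    then obtain g' where "g' permutes {1..n}" "exc n L g' < exc n L g" using step[OF lat g] by blast
    then show False using mn by (meson leD)
  qed
  then show ?thesis using g by blast
qed

theorem theorem6p4:
  fixes n :: nat and L :: "nat \<Rightarrow> nat \<Rightarrow> nat"
  assumes "latin_square n L"
    and "\<not> (\<exists>T. transversal n L T)"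
  shows "covering_radius n (row_set n L) = n - 2"
  unfolding covering_radius_def
proof (rule Least_equality)
  show "\<forall>g\<in>sym_group n. \<exists>p\<in>row_set n L. hamming n g p \<le> n - 2"
  proof
    fix g assume "g \<in> sym_group n"
    then have g: "g permutes {1..n}" by (simp add: sym_group_def)
    obtain t where t: "t \<in> {1..n}" "agr n L g t \<ge> 2" using part_a[OF assms g] by blast
    have "hamming n g (row_perm n L t) \<le> n - 2" using hamming_row[OF t(1)] t(2) by simp
    moreover have "row_perm n L t \<in> row_set n L" using t(1) by (simp add: row_set_def)
    ultimately show "\<exists>p\<in>row_set n L. hamming n g p \<le> n - 2" by blast
  qed
next
  fix y assume y: "\<forall>g\<in>sym_group n. \<exists>p\<in>row_set n L. hamming n g p \<le> y"
  obtain g where g: "g permutes {1..n}" and a2: "\<forall>t\<in>{1..n}. agr n L g t \<le> 2"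
    using part_b[OF assms(1)] by blast
  then obtain p where p: "p \<in> row_set n L" "hamming n g p \<le> y" using y by (auto simp: sym_group_def)
  then obtain t where t: "t \<in> {1..n}" "p = row_perm n L t" by (auto simp: row_set_def)
  show "n - 2 \<le> y" using hamming_row[OF t(1), of g L] a2 t p by force
qed

end
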